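(* There exist symmetric pseudo-Boolean functions of $n$ variables for which any quadratization must involve at least $\Omega(\sqrt{n})$ auxiliary variables; that is, there is a constant $c>0$ such that for infinitely many $n$ there is a symmetric $f:\{0,1\}^n\to\mathbb{R}$ every quadratization of which uses at least $c\sqrt n$ auxiliary variables.
   Context: A pseudo-Boolean function is a map $\{0,1\}^n\to\mathbb{R}$; it is symmetric if its value depends only on the Hamming weight. A quadratization of $f$ using $m$ auxiliary variables is a polynomial $g(x,y)$ of degree at most $2$ in $x_1,\ldots,x_n,y_1,\ldots,y_m$ such that $f(x)=\min\{g(x,y):y\in\{0,1\}^m\}$ for all $x\in\{0,1\}^n$. *)

theory Defs
  imports Complex_Main
begin

text \<open>Boolean points of \<open>{0,1}^n\<close>: maps \<open>nat \<Rightarrow> bool\<close> that are False outside \<open>{0..<n}\<close>.\<close>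
definition bool_vecs :: "nat \<Rightarrow> (nat \<Rightarrow> bool) set" where
  "bool_vecs n = {x. \<forall>i\<ge>n. \<not> x i}"

definition hweight :: "nat \<Rightarrow> (nat \<Rightarrow> bool) \<Rightarrow> nat" where
  "hweight n x = card {i. i < n \<and> x i}"

definition symmetric_pbf :: "nat \<Rightarrow> ((nat \<Rightarrow> bool) \<Rightarrow> real) \<Rightarrow> bool" where
  "symmetric_pbf n f \<longleftrightarrow>
     (\<forall>x\<in>bool_vecs n. \<forall>y\<in>bool_vecs n. hweight n x = hweight n y \<longrightarrow> f x = f y)"

definition quad_poly :: "nat \<Rightarrow> real \<Rightarrow> (nat \<Rightarrow> real) \<Rightarrow> (nat \<Rightarrow> nat \<Rightarrow> real) \<Rightarrow> (nat \<Rightarrow> real) \<Rightarrow> real" where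
  "quad_poly N c a b z = c + (\<Sum>i<N. a i * z i) + (\<Sum>i<N. \<Sum>j<N. b i j * z i * z j)"

definition concat_vec :: "nat \<Rightarrow> (nat \<Rightarrow> bool) \<Rightarrow> (nat \<Rightarrow> bool) \<Rightarrow> nat \<Rightarrow> real" where
  "concat_vec n x y i = (if i < n then of_bool (x i) else of_bool (y (i - n)))"

definition has_quadratization :: "nat \<Rightarrow> nat \<Rightarrow> ((nat \<Rightarrow> bool) \<Rightarrow> real) \<Rightarrow> bool" where
  "has_quadratization n m f \<longleftrightarrow>
     (\<exists>c a b. \<forall>x\<in>bool_vecs n.
        f x = Min ((\<lambda>y. quad_poly (n + m) c a b (concat_vec n x y)) ` bool_vecs m))"

end

theory Submission imports Defs "HOL-Library.Function_Algebras" "HOL-Library.Discrete_Functions" "HOL-Library.FuncSet" begin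

definition sc :: "real \<Rightarrow> ('a \<Rightarrow> real) \<Rightarrow> ('a \<Rightarrow> real)" where
  "sc c f = (\<lambda>x. c * f x)"

interpretation V: vector_space "sc :: real \<Rightarrow> ('a \<Rightarrow> real) \<Rightarrow> ('a \<Rightarrow> real)"
  by unfold_locales (auto simp: sc_def fun_eq_iff algebra_simps)

lemma sc_inv: "(l::real) \<noteq> 0 \<Longrightarrow> sc (inverse l) (sc l u) = u"
  by (simp add: sc_def fun_eq_iff)

lemma avoid_union:
  fixes U :: "'i \<Rightarrow> ('a \<Rightarrow> real) set" and W :: "('a \<Rightarrow> real) set"
  assumes "finite I" "\<And>i. i\<in>I \<Longrightarrow> V.subspace (U i)"
    "\<And>i. i\<in>I \<Longrightarrow> \<exists>w\<in>W. w \<notin> U i" "V.subspace W"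
  shows "\<exists>w\<in>W. \<forall>i\<in>I. w \<notin> U i"
  using assms
proof (induction I rule: finite_induct)
  case empty
  then show ?case using V.subspace_0 by blast
next
  case (insert j I)
  from insert obtain w where w: "w \<in> W" "\<forall>i\<in>I. w \<notin> U i" by auto
  show ?case
  proof (cases "w \<in> U j")
    case False then show ?thesis using w by auto
  next
    case True
    from insert.prems(2)[of j] obtain u where u: "u \<in> W" "u \<notin> U j" by auto
    define L where "L = (of_nat ` {1..card I + 1} :: real set)"
    define Bad where "Bad i = {l \<in> L. w + sc l u \<in> U i}" for i
    have finL: "finite L" unfolding L_def by auto
    have cardL: "card L = card I + 1" unfolding L_def
      by (subst card_image) (auto simp: inj_on_def)
    have bad1: "card (Bad i) \<le> 1" if i: "i \<in> I" for i
    proof -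
      have sub: "V.subspace (U i)" using insert i by auto
      have "\<forall>a\<in>Bad i. \<forall>b\<in>Bad i. a = b"
      proof (intro ballI, rule ccontr)
        fix a b assume a: "a \<in> Bad i" and b: "b \<in> Bad i" and ab: "a \<noteq> b"
        have "(w + sc a u) - (w + sc b u) \<in> U i"
          using a b V.subspace_diff[OF sub] unfolding Bad_def by blast
        moreover have "(w + sc a u) - (w + sc b u) = sc (a - b) u"
          by (auto simp: sc_def fun_eq_iff algebra_simps)
        ultimately have "sc (inverse (a - b)) (sc (a - b) u) \<in> U i"
          using V.subspace_scale[OF sub] by metis
        then have uU: "u \<in> U i" using ab sc_inv[of "a-b" u] by simp
        have "(w + sc a u) - sc a u \<in> U i"
          using a uU V.subspace_diff[OF sub] V.subspace_scale[OF sub] unfolding Bad_def by blast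
        then have "w \<in> U i" by simp
        then show False using w i by auto
      qed
      moreover have "finite (Bad i)" using finL unfolding Bad_def by auto
      ultimately show ?thesis using card_le_Suc0_iff_eq by auto
    qed
    have "card (\<Union>i\<in>I. Bad i) \<le> (\<Sum>i\<in>I. card (Bad i))"
      by (rule card_UN_le[OF insert(1)])
    also have "\<dots> \<le> (\<Sum>i\<in>I. 1)" by (rule sum_mono) (use bad1 in auto)
    also have "\<dots> = card I" by simp
    finally have "card (\<Union>i\<in>I. Bad i) < card L" using cardL by simp
    moreover have "finite (\<Union>i\<in>I. Bad i)"
      using insert(1) finL unfolding Bad_def by auto
    ultimately have "\<not> L \<subseteq> (\<Union>i\<in>I. Bad i)"
      by (meson card_mono leD)
    then obtain l where l: "l \<in> L" "\<forall>i\<in>I. l \<notin> Bad i" by auto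
    have l0: "l \<noteq> 0" using l(1) unfolding L_def by auto
    have subj: "V.subspace (U j)" using insert by auto
    have inW: "w + sc l u \<in> W"
      using V.subspace_add[OF insert(6)] V.subspace_scale[OF insert(6)] w u by auto
    have notj: "w + sc l u \<notin> U j"
    proof
      assume "w + sc l u \<in> U j"
      then have "sc (inverse l) ((w + sc l u) - w) \<in> U j"
        using True V.subspace_diff[OF subj] V.subspace_scale[OF subj] by blast
      then have "u \<in> U j" using l0 sc_inv[of l u] by simp
      then show False using u by auto
    qed
    show ?thesis using inW notj l unfolding Bad_def by auto
  qed
qed

lemma sum_fun_apply: "(sum f A) x = (\<Sum>a\<in>A. f a x)" for f :: "'i \<Rightarrow> 'a \<Rightarrow> real"
  by (induction A rule: infinite_finite_induct) auto

definition blk :: "nat \<Rightarrow> nat" where "blk j = floor_log (j + 1)"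

definition wt :: "nat \<Rightarrow> (nat \<Rightarrow> bool) \<Rightarrow> nat" where
  "wt k z = (\<Sum>i<k. if z i then 2^i else 0)"

lemma blk_less: "j < 2^k - 1 \<Longrightarrow> blk j < k"
proof -
  assume "j < 2^k - 1"
  then have "j + 1 < 2^k" by simp
  moreover have "2 ^ blk j \<le> j + 1" unfolding blk_def by (rule floor_log_exp2_le) simp
  ultimately have "(2::nat) ^ blk j < 2 ^ k" by linarith
  then show ?thesis by (simp add: power_strict_increasing_iff)
qed

lemma blk_top: "2^k - 1 \<le> j \<Longrightarrow> j < 2^(Suc k) - 1 \<Longrightarrow> blk j = k"
  unfolding blk_def by (rule floor_log_eqI) auto

lemma card_wt: "card {j. j < 2^k - 1 \<and> z (blk j)} = wt k z"
proof (induction k)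
  case 0
  then show ?case by (simp add: wt_def)
next
  case (Suc k)
  have "{j. j < 2^(Suc k) - 1 \<and> z (blk j)} = {j. j < 2^k - 1 \<and> z (blk j)} \<union> {j::nat. 2^k - 1 \<le> j \<and> j < 2^(Suc k) - 1 \<and> z k}"
  proof -
    have "(2::nat)^k - 1 \<le> 2^(Suc k) - 1" by simp
    then show ?thesis using blk_top[of k] by (auto simp del: power_Suc)
  qed
  moreover have "card {j::nat. 2^k - 1 \<le> j \<and> j < 2^(Suc k) - 1 \<and> z k} = (if z k then 2^k else 0)"
  proof (cases "z k")
    case True
    then have "{j::nat. 2^k - 1 \<le> j \<and> j < 2^(Suc k) - 1 \<and> z k} = {(2::nat)^k - 1..<2^(Suc k) - 1}" by auto
    moreover have "(2::nat)^(Suc k) - 1 - (2^k - 1) = 2^k"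
      using one_le_power[of "2::nat" k] by simp
    ultimately show ?thesis using True by simp
  qed simp
  moreover have "{j. j < 2^k - 1 \<and> z (blk j)} \<inter> {j::nat. 2^k - 1 \<le> j \<and> j < 2^(Suc k) - 1 \<and> z k} = {}" by auto
  ultimately show ?case using Suc by (simp add: card_Un_disjoint wt_def)
qed

lemma wt_less: "wt k z < 2^k"
proof (induction k)
  case 0 then show ?case by (simp add: wt_def)
next
  case (Suc k) then show ?case by (simp add: wt_def)
qed

lemma wt_inj_aux: "wt k z = wt k z' \<Longrightarrow> i < k \<Longrightarrow> z i = z' i"
proof (induction k arbitrary: i)
  case 0 then show ?case by simp
next
  case (Suc k)
  have e: "wt (Suc k) z = wt k z + (if z k then 2^k else 0)" for z by (simp add: wt_def)
  have zk: "z k = z' k"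
    using Suc.prems(1) e[of z] e[of z'] wt_less[of k z] wt_less[of k z'] by (auto split: if_splits)
  then have "wt k z = wt k z'" using Suc.prems(1) e[of z] e[of z'] by simp
  then show ?case using Suc zk by (cases "i = k") auto
qed

lemma wt_inj: "inj_on (wt k) (bool_vecs k)"
proof (rule inj_onI)
  fix z z' assume z: "z \<in> bool_vecs k" and z': "z' \<in> bool_vecs k" and e: "wt k z = wt k z'"
  show "z = z'"
  proof
    fix i show "z i = z' i"
    proof (cases "i < k")
      case True then show ?thesis using wt_inj_aux[OF e] by blast
    next
      case False then show ?thesis using z z' unfolding bool_vecs_def by auto
    qed
  qed
qed

lemma bool_vecs_eq: "bool_vecs k = (\<lambda>S i. i \<in> S) ` Pow {..<k}"
proof -
  have "x \<in> (\<lambda>S i. i \<in> S) ` Pow {..<k}" if "x \<in> bool_vecs k" for x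
    using that unfolding bool_vecs_def
  proof -
    have "x = (\<lambda>i. i \<in> {i. i < k \<and> x i})"
      using that unfolding bool_vecs_def by (auto simp: fun_eq_iff) (meson not_le)
    then show ?thesis by (rule image_eqI) auto
  qed
  then show ?thesis unfolding bool_vecs_def by auto
qed

lemma finite_bool_vecs: "finite (bool_vecs k)"
  by (simp add: bool_vecs_eq)

lemma card_bool_vecs: "card (bool_vecs k) = 2^k"
proof -
  have "inj_on (\<lambda>S i. i \<in> S) (Pow {..<k})"
    by (auto simp: inj_on_def fun_eq_iff)
  then show ?thesis by (simp add: bool_vecs_eq card_image card_Pow)
qed

definition vv :: "nat \<Rightarrow> nat \<Rightarrow> ((nat\<Rightarrow>bool) \<Rightarrow> (nat\<Rightarrow>bool)) \<Rightarrow> (nat\<Rightarrow>bool) \<Rightarrow> nat \<Rightarrow> real" where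
  "vv k m \<sigma> z p = (if p = k + m then 1 else concat_vec k z (\<sigma> z) p)"

definition mono :: "nat \<Rightarrow> nat \<Rightarrow> ((nat\<Rightarrow>bool) \<Rightarrow> (nat\<Rightarrow>bool)) \<Rightarrow> nat \<times> nat \<Rightarrow> (nat\<Rightarrow>bool) \<Rightarrow> real" where
  "mono k m \<sigma> pq = (\<lambda>z. if z \<in> bool_vecs k then vv k m \<sigma> z (fst pq) * vv k m \<sigma> z (snd pq) else 0)"

definition TT where "TT k m \<sigma> = mono k m \<sigma> ` ({..k+m} \<times> {..k+m})"

lemma finite_TT: "finite (TT k m \<sigma>)" by (simp add: TT_def)

lemma card_TT: "card (TT k m \<sigma>) \<le> (k+m+1)^2"
proof -
  have "card (TT k m \<sigma>) \<le> card ({..k+m} \<times> {..k+m})" unfolding TT_def by (rule card_image_le) simp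
  then show ?thesis by (simp add: card_cartesian_product power2_eq_square)
qed

definition ee :: "nat \<Rightarrow> (nat\<Rightarrow>bool) \<Rightarrow> (nat\<Rightarrow>bool) \<Rightarrow> real" where
  "ee k z0 = (\<lambda>z. if z = z0 then 1 else 0)"

definition EE where "EE k = ee k ` bool_vecs k"

lemma card_EE: "card (EE k) = 2^k"
proof -
  have "inj_on (ee k) (bool_vecs k)"
    by (rule inj_onI) (auto simp: ee_def fun_eq_iff split: if_splits)
  then show ?thesis by (simp add: EE_def card_image card_bool_vecs)
qed

lemma indep_EE: "V.independent (EE k)"
proof (rule V.independent_if_scalars_zero)
  show "finite (EE k)" by (simp add: EE_def finite_bool_vecs)
next
  fix f x assume s: "(\<Sum>x\<in>EE k. sc (f x) x) = 0" and x: "x \<in> EE k"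
  then obtain z0 where z0: "x = ee k z0" unfolding EE_def by auto
  have "0 = (\<Sum>y\<in>EE k. sc (f y) y) z0" using s by simp
  also have "\<dots> = (\<Sum>y\<in>EE k. f y * y z0)" by (simp add: sum_fun_apply sc_def)
  also have "\<dots> = f x * x z0 + (\<Sum>y\<in>EE k - {x}. f y * y z0)"
    by (rule sum.remove[OF _ x]) (simp add: EE_def finite_bool_vecs)
  also have "(\<Sum>y\<in>EE k - {x}. f y * y z0) = 0"
  proof (rule sum.neutral, rule ballI)
    fix y assume "y \<in> EE k - {x}"
    then obtain z1 where "y = ee k z1" "z1 \<noteq> z0" using z0 unfolding EE_def by auto
    then show "f y * y z0 = 0" by (simp add: ee_def)
  qed
  finally show "f x = 0" using z0 by (simp add: ee_def)
qed

lemma span_EE_vanish: "w \<in> V.span (EE k) \<Longrightarrow> z \<notin> bool_vecs k \<Longrightarrow> w z = 0"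
proof -
  assume w: "w \<in> V.span (EE k)" and z: "z \<notin> bool_vecs k"
  have "V.span (EE k) \<subseteq> {w. \<forall>z. z \<notin> bool_vecs k \<longrightarrow> w z = 0}"
  proof (rule V.span_minimal)
    show "EE k \<subseteq> {w. \<forall>z. z \<notin> bool_vecs k \<longrightarrow> w z = 0}"
      by (auto simp: EE_def ee_def)
    show "V.subspace {w. \<forall>z. z \<notin> bool_vecs k \<longrightarrow> w z = 0}"
      by (auto simp: V.subspace_def sc_def)
  qed
  then show ?thesis using w z by auto
qed

lemma proper_TT:
  assumes "(k+m+1)^2 < 2^k"
  shows "\<exists>w\<in>V.span (EE k). w \<notin> V.span (TT k m \<sigma>)"
proof (rule ccontr)
  assume "\<not> ?thesis"
  then have "EE k \<subseteq> V.span (TT k m \<sigma>)" using V.span_base by blast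
  then have "card (EE k) \<le> card (TT k m \<sigma>)"
    using V.independent_span_bound[OF finite_TT indep_EE] by blast
  then show False using card_EE[of k] card_TT[of k m \<sigma>] assms by linarith
qed

definition XX :: "nat \<Rightarrow> (nat\<Rightarrow>bool) \<Rightarrow> nat \<Rightarrow> bool" where
  "XX k z = (\<lambda>j. j < 2^k - 1 \<and> z (blk j))"

lemma XX_in: "XX k z \<in> bool_vecs (2^k - 1)"
  by (simp add: XX_def bool_vecs_def)

lemma hweight_XX: "hweight (2^k - 1) (XX k z) = wt k z"
  unfolding hweight_def XX_def using card_wt[of k z] by simp

lemma vv_pi:
  assumes "i < 2^k - 1 + m"
  shows "vv k m \<sigma> z (if i < 2^k - 1 then blk i else i - (2^k - 1) + k)
       = concat_vec (2^k - 1) (XX k z) (\<sigma> z) i"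
proof (cases "i < 2^k - 1")
  case True
  then show ?thesis using blk_less[OF True] by (simp add: vv_def concat_vec_def XX_def)
next
  case False
  define N :: nat where "N = 2^k - 1"
  have i: "\<not> i < N" "i < N + m" using False assms unfolding N_def by auto
  have 1: "\<not> i - N + k < k" "i - N + k \<noteq> k + m" "i - N + k - k = i - N" using i by auto
  show ?thesis using i 1 unfolding N_def[symmetric] by (simp add: vv_def concat_vec_def)
qed

lemma no_quad:
  assumes k: "(k+m+1)^2 < 2^k" and phi: "\<phi> \<in> V.span (EE k)"
    and notin: "\<forall>\<sigma>\<in>PiE (bool_vecs k) (\<lambda>_. bool_vecs m). \<phi> \<notin> V.span (TT k m \<sigma>)"
    and f: "\<forall>z\<in>bool_vecs k. f (XX k z) = \<phi> z"
  shows "\<not> has_quadratization (2^k - 1) m f"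
proof
  define n :: nat where "n = 2^k - 1"
  assume "has_quadratization (2^k - 1) m f"
  then obtain c a b where H: "\<forall>x\<in>bool_vecs n. f x = Min ((\<lambda>y. quad_poly (n + m) c a b (concat_vec n x y)) ` bool_vecs m)"
    unfolding has_quadratization_def n_def by blast
  define G where "G z y = quad_poly (n + m) c a b (concat_vec n (XX k z) y)" for z y
  have ne: "bool_vecs m \<noteq> {}" by (auto simp: bool_vecs_def)
  have ex: "\<exists>y. y \<in> bool_vecs m \<and> G z y = \<phi> z" if z: "z \<in> bool_vecs k" for z
  proof -
    have "Min (G z ` bool_vecs m) \<in> G z ` bool_vecs m"
      by (rule Min_in) (use ne finite_bool_vecs in auto)
    moreover have "\<phi> z = Min (G z ` bool_vecs m)"
      using H XX_in[of k z] f z unfolding G_def n_def by auto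
    ultimately show ?thesis by auto
  qed
  define \<sigma> where "\<sigma> = restrict (\<lambda>z. SOME y. y \<in> bool_vecs m \<and> G z y = \<phi> z) (bool_vecs k)"
  have sig: "\<sigma> z \<in> bool_vecs m \<and> G z (\<sigma> z) = \<phi> z" if "z \<in> bool_vecs k" for z
    using someI_ex[OF ex[OF that]] that unfolding \<sigma>_def by auto
  have sigPi: "\<sigma> \<in> PiE (bool_vecs k) (\<lambda>_. bool_vecs m)"
    using sig unfolding \<sigma>_def by auto
  define K where "K = k + m"
  define \<pi> where "\<pi> i = (if i < n then blk i else i - n + k)" for i
  have piK: "\<pi> i \<le> K" "\<pi> i \<noteq> K" if "i < n + m" for i
    using that blk_less[of i k] unfolding \<pi>_def K_def n_def by auto
  have vvpi: "vv k m \<sigma> z (\<pi> i) = concat_vec n (XX k z) (\<sigma> z) i" if "i < n + m" for i z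
    using vv_pi[of i k m \<sigma> z] that unfolding \<pi>_def n_def by simp
  have vvK: "vv k m \<sigma> z K = 1" for z by (simp add: vv_def K_def)
  have eq: "\<phi> = sc c (mono k m \<sigma> (K,K)) + (\<Sum>i<n+m. sc (a i) (mono k m \<sigma> (\<pi> i, K)))
      + (\<Sum>i<n+m. \<Sum>j<n+m. sc (b i j) (mono k m \<sigma> (\<pi> i, \<pi> j)))"
  proof
    fix z
    show "\<phi> z = (sc c (mono k m \<sigma> (K,K)) + (\<Sum>i<n+m. sc (a i) (mono k m \<sigma> (\<pi> i, K)))
      + (\<Sum>i<n+m. \<Sum>j<n+m. sc (b i j) (mono k m \<sigma> (\<pi> i, \<pi> j)))) z"
    proof (cases "z \<in> bool_vecs k")
      case False
      then show ?thesis using span_EE_vanish[OF phi False]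
        by (simp add: sum_fun_apply sc_def mono_def)
    next
      case True
      have "\<phi> z = G z (\<sigma> z)" using sig[OF True] by simp
      also have "\<dots> = c + (\<Sum>i<n+m. a i * concat_vec n (XX k z) (\<sigma> z) i)
          + (\<Sum>i<n+m. \<Sum>j<n+m. b i j * concat_vec n (XX k z) (\<sigma> z) i * concat_vec n (XX k z) (\<sigma> z) j)"
        by (simp add: G_def quad_poly_def)
      also have "\<dots> = (sc c (mono k m \<sigma> (K,K)) + (\<Sum>i<n+m. sc (a i) (mono k m \<sigma> (\<pi> i, K)))
         + (\<Sum>i<n+m. \<Sum>j<n+m. sc (b i j) (mono k m \<sigma> (\<pi> i, \<pi> j)))) z"
        using True by (simp add: sum_fun_apply sc_def mono_def vvK vvpi mult.assoc)
      finally show ?thesis .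
    qed
  qed
  have mem: "mono k m \<sigma> pq \<in> V.span (TT k m \<sigma>)" if "pq \<in> {..K} \<times> {..K}" for pq
    using that by (intro V.span_base) (simp add: TT_def K_def)
  have "\<phi> \<in> V.span (TT k m \<sigma>)"
    unfolding eq
    by (intro V.span_add V.span_sum V.span_scale mem) (auto simp: piK)
  then show False using notin sigPi by blast
qed

lemma pow_bound: "10 \<le> k \<Longrightarrow> 4*(k+1)^2 \<le> (2::nat)^k"
proof (induction k rule: dec_induct)
  case base then show ?case by simp
next
  case (step k)
  have "4*(Suc k+1)^2 \<le> 2*(4*(k+1)^2)"
  proof -
    have "10*10 \<le> k*k" using step(1) by (intro mult_le_mono) auto
    then show ?thesis by (simp add: power2_eq_square algebra_simps)
  qed
  also have "\<dots> \<le> 2 * 2^k" using step by simp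
  finally show ?case by simp
qed

lemma final_arith:
  assumes k: "10 \<le> k" and m: "2^k \<le> (k+m+1)^2"
  shows "(1/2) * sqrt (real (2^k - 1)) \<le> real m"
proof -
  have "sqrt (real (2^k - 1)) \<le> sqrt (2^k)" by simp
  have a: "sqrt (2^k) \<le> real (k+m+1)"
  proof -
    have "real (2^k) \<le> real ((k+m+1)^2)" using m by linarith
    then have "sqrt (2^k) \<le> sqrt (real ((k+m+1)^2))" by (simp del: of_nat_power)
    then show ?thesis by simp
  qed
  have b: "2 * real (k+1) \<le> sqrt (2^k)"
  proof -
    have "real (4*(k+1)^2) \<le> real ((2::nat)^k)" using pow_bound[OF k] by linarith
    then have "(2 * real (k+1))^2 \<le> 2^k" by (simp add: power2_eq_square algebra_simps)
    then show ?thesis using real_le_rsqrt by blast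
  qed
  have c: "sqrt (real (2^k - 1)) \<le> sqrt (2^k)" by simp
  have a': "sqrt (2^k) \<le> real k + real m + 1" using a by simp
  have b': "2 * real k + 2 \<le> sqrt (2^k)" using b by simp
  have "sqrt (real (2^k-1)) \<le> 2 * real m" using a' b' c by linarith
  then show ?thesis by simp
qed

theorem theorem7:
  shows "\<exists>C::real. C > 0 \<and>
    (\<forall>N::nat. \<exists>n\<ge>N. \<exists>f. symmetric_pbf n f \<and>
        (\<forall>m. has_quadratization n m f \<longrightarrow> real m \<ge> C * sqrt (real n)))"
proof (intro exI[of _ "1/2"] conjI allI)
  fix N :: nat
  define k where "k = N + 10"
  have k10: "10 \<le> k" unfolding k_def by simp
  define I where "I = Sigma {m. (k+m+1)^2 < 2^k} (\<lambda>m. PiE (bool_vecs k) (\<lambda>_. bool_vecs m))"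
  have finI: "finite I"
  proof -
    have "{m. (k+m+1)^2 < 2^k} \<subseteq> {..<2^k}"
    proof
      fix m assume "m \<in> {m. (k+m+1)^2 < 2^k}"
      moreover have "m \<le> (k+m+1)^2" by (simp add: power2_eq_square)
      ultimately show "m \<in> {..<2^k}" by auto
    qed
    then have "finite {m. (k+m+1)^2 < (2::nat)^k}" using finite_subset by blast
    then show ?thesis unfolding I_def
      by (intro finite_SigmaI finite_PiE finite_bool_vecs) auto
  qed
  obtain \<phi> where phi: "\<phi> \<in> V.span (EE k)" "\<forall>i\<in>I. \<phi> \<notin> V.span (TT k (fst i) (snd i))"
    using avoid_union[of I "\<lambda>i. V.span (TT k (fst i) (snd i))" "V.span (EE k)", OF finI]
      proper_TT unfolding I_def by auto
  define n :: nat where "n = 2^k - 1"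
  define f where "f x = \<phi> (the_inv_into (bool_vecs k) (wt k) (hweight n x))" for x
  have "N \<le> k" unfolding k_def by simp
  also have "k < 2^k" by simp
  finally have Nn: "N \<le> n" unfolding n_def by simp
  have sym: "symmetric_pbf n f" unfolding symmetric_pbf_def f_def by auto
  have fX: "\<forall>z\<in>bool_vecs k. f (XX k z) = \<phi> z"
    unfolding f_def n_def hweight_XX using the_inv_into_f_f[OF wt_inj] by auto
  have "real m \<ge> 1/2 * sqrt (real n)" if H: "has_quadratization n m f" for m
  proof (cases "(k+m+1)^2 < 2^k")
    case True
    have "\<forall>\<sigma>\<in>PiE (bool_vecs k) (\<lambda>_. bool_vecs m). \<phi> \<notin> V.span (TT k m \<sigma>)"
      using phi(2) True unfolding I_def by auto
    from no_quad[OF True phi(1) this fX] H show ?thesis unfolding n_def by simp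
  next
    case False
    then show ?thesis using final_arith[OF k10, of m] unfolding n_def by simp
  qed
  then show "\<exists>n\<ge>N. \<exists>f. symmetric_pbf n f \<and>
        (\<forall>m. has_quadratization n m f \<longrightarrow> real m \<ge> 1/2 * sqrt (real n))"
    using Nn sym by blast
qed simp

end
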